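(* Let $\mathcal Q$ be a family of probability measures and $(M_t)_{t\in\mathbb N_0}$ a $\mathcal Q$-NM with $M_0=1$. Let $Y_t:=M_t/M_{t-1}$ (with $0/0:=1$). Assume that for every $\varepsilon>0$ there exists $\mathtt Q\in\mathcal Q$ such that $\mathtt Q(\sum_{t\in\mathbb N}(Y_t-1)^2=\infty)=1$ and, for every $t\in\mathbb N$ and every $\mathcal F_{t-1}$-measurable random variable $\beta>1$, $\mathtt E_{\mathtt Q}[Y_t\mathbf 1\{Y_t\ge\beta\}\mid\mathcal F_{t-1}]\le\beta(1+\varepsilon)\,\mathtt Q(Y_t\ge\beta\mid\mathcal F_{t-1})$ a.s. Then $\sup_{\mathtt Q\in\mathcal Q}\mathtt Q(\sup_{t\in\mathbb N_0}M_t\ge1/\alpha)=\alpha$ for every $\alpha\in(0,1]$.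
   Context: Filtration $\mathcal F_0=\sigma(U)$, $\mathcal F_t=\sigma(U,X_1,\dots,X_t)$ generated by an independent uniform $U$ and observations $(X_t)$. A $\mathcal Q$-NM is an adapted nonnegative process, $\mathtt Q$-integrable, with $\mathtt E_{\mathtt Q}[M_t\mid\mathcal F_s]=M_s$ $\mathtt Q$-a.s. for all $s\le t$ and all $\mathtt Q\in\mathcal Q$. *)

theory Defs
  imports "HOL-Probability.Probability"
begin

definition filt :: "'a measure \<Rightarrow> ('a \<Rightarrow> real) \<Rightarrow> 'b measure \<Rightarrow> (nat \<Rightarrow> 'a \<Rightarrow> 'b) \<Rightarrow> nat \<Rightarrow> 'a measure"
  where "filt \<Omega> U S X t = sigma (space \<Omega>)
     ({U -` B \<inter> space \<Omega> | B. B \<in> sets borel} \<union>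
      (\<Union>i\<in>{1..t}. {X i -` A \<inter> space \<Omega> | A. A \<in> sets S}))"

definition setting :: "'a measure \<Rightarrow> 'a measure set \<Rightarrow> ('a \<Rightarrow> real) \<Rightarrow> 'b measure \<Rightarrow> (nat \<Rightarrow> 'a \<Rightarrow> 'b) \<Rightarrow> bool"
  where "setting \<Omega> \<Q> U S X \<longleftrightarrow>
     U \<in> borel_measurable \<Omega> \<and> (\<forall>t. X t \<in> measurable \<Omega> S) \<and>
     (\<forall>Q\<in>\<Q>. prob_space Q \<and> sets Q = sets \<Omega> \<and> space Q = space \<Omega> \<and>
        distr Q lborel U = uniform_measure lborel {0..1} \<and>
        prob_space.indep_set Q {U -` B \<inter> space \<Omega> | B. B \<in> sets borel}
          (sigma_sets (space \<Omega>) (\<Union>i\<in>{1..}. {X i -` A \<inter> space \<Omega> | A. A \<in> sets S})))"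

definition is_QNM :: "'a measure \<Rightarrow> 'a measure set \<Rightarrow> ('a \<Rightarrow> real) \<Rightarrow> 'b measure \<Rightarrow> (nat \<Rightarrow> 'a \<Rightarrow> 'b) \<Rightarrow> (nat \<Rightarrow> 'a \<Rightarrow> real) \<Rightarrow> bool"
  where "is_QNM \<Omega> \<Q> U S X M \<longleftrightarrow>
     (\<forall>t. M t \<in> borel_measurable (filt \<Omega> U S X t)) \<and>
     (\<forall>t. \<forall>\<omega>\<in>space \<Omega>. M t \<omega> \<ge> 0) \<and>
     (\<forall>Q\<in>\<Q>. \<forall>t. integrable Q (M t)) \<and>
     (\<forall>Q\<in>\<Q>. \<forall>s t. s \<le> t \<longrightarrow>
        (AE \<omega> in Q. real_cond_exp Q (filt \<Omega> U S X s) (M t) \<omega> = M s \<omega>))"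

definition ratio :: "(nat \<Rightarrow> 'a \<Rightarrow> real) \<Rightarrow> nat \<Rightarrow> 'a \<Rightarrow> real"
  where "ratio M t \<omega> = (if M (t - 1) \<omega> = 0 \<and> M t \<omega> = 0 then 1 else M t \<omega> / M (t - 1) \<omega>)"

end

theory Submission imports Defs begin

locale qnm =
  fixes Q :: "'a measure" and F :: "nat \<Rightarrow> 'a measure" and M :: "nat \<Rightarrow> 'a \<Rightarrow> real"
  assumes ps: "prob_space Q"
    and subQ: "\<And>t. subalgebra Q (F t)"
    and subF: "\<And>s t. s \<le> t \<Longrightarrow> subalgebra (F t) (F s)"
    and Mmeas: "\<And>t. M t \<in> borel_measurable (F t)"
    and Mnn: "\<And>t x. x \<in> space Q \<Longrightarrow> M t x \<ge> 0"
    and Mint: "\<And>t. integrable Q (M t)"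
    and Mmart: "\<And>s t. s \<le> t \<Longrightarrow> AE x in Q. real_cond_exp Q (F s) (M t) x = M s x"
    and M0: "\<And>x. x \<in> space Q \<Longrightarrow> M 0 x = 1"
begin

interpretation prob_space Q by (rule ps)

lemma sfs: "sigma_finite_subalgebra Q (F t)"
  by (rule finite_measure_subalgebra_is_sigma_finite)
     (simp add: finite_measure_subalgebra_def finite_measure_subalgebra_axioms_def subQ finite_measure_axioms)

lemma measF: "f \<in> borel_measurable (F s) \<Longrightarrow> s \<le> t \<Longrightarrow> f \<in> borel_measurable (F t)"
  using measurable_from_subalg subF by blast

lemma measQ: "f \<in> borel_measurable (F s) \<Longrightarrow> f \<in> borel_measurable Q"
  using measurable_from_subalg subQ by blast

lemma setsF: "A \<in> sets (F s) \<Longrightarrow> s \<le> t \<Longrightarrow> A \<in> sets (F t)"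
  using subF unfolding subalgebra_def by blast

lemma setsQ: "A \<in> sets (F s) \<Longrightarrow> A \<in> sets Q"
  using subQ unfolding subalgebra_def by blast

lemma spaceF: "space (F s) = space Q"
  using subQ unfolding subalgebra_def by blast

lemma MmeasF: "s \<le> t \<Longrightarrow> M s \<in> borel_measurable (F t)"
  using measF Mmeas by blast

lemma MmeasQ[measurable]: "M s \<in> borel_measurable Q"
  using measQ Mmeas by blast

lemma mart_set:
  assumes "s \<le> t" "A \<in> sets (F s)"
  shows "(\<integral>\<^sup>+x. ennreal (indicator A x * M t x) \<partial>Q) = (\<integral>\<^sup>+x. ennreal (indicator A x * M s x) \<partial>Q)"
proof -
  interpret sigma_finite_subalgebra Q "F s" by (rule sfs)
  have AQ: "A \<in> sets Q" using assms setsQ by blast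
  have i1: "integrable Q (\<lambda>x. indicator A x * M t x)"
    using integrable_mult_indicator[OF AQ Mint[of t]] by simp
  have i2: "integrable Q (\<lambda>x. indicator A x * M s x)"
    using integrable_mult_indicator[OF AQ Mint[of s]] by simp
  have "(\<integral>x. indicator A x * M t x \<partial>Q) = (\<integral>x. indicator A x * real_cond_exp Q (F s) (M t) x \<partial>Q)"
    by (rule real_cond_exp_intg(2)[symmetric]) (use i1 assms in auto)
  also have "\<dots> = (\<integral>x. indicator A x * M s x \<partial>Q)"
    using AQ apply (intro integral_cong_AE)
      apply measurable
    using Mmart[OF assms(1)] by (auto elim!: AE_mp)
  finally have eq: "(\<integral>x. indicator A x * M t x \<partial>Q) = (\<integral>x. indicator A x * M s x \<partial>Q)" .
  have "(\<integral>\<^sup>+x. ennreal (indicator A x * M t x) \<partial>Q) = ennreal (\<integral>x. indicator A x * M t x \<partial>Q)"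
    by (rule nn_integral_eq_integral[OF i1]) (auto simp: Mnn)
  moreover have "(\<integral>\<^sup>+x. ennreal (indicator A x * M s x) \<partial>Q) = ennreal (\<integral>x. indicator A x * M s x \<partial>Q)"
    by (rule nn_integral_eq_integral[OF i2]) (auto simp: Mnn)
  ultimately show ?thesis using eq by simp
qed

lemma mart_nn:
  assumes "s \<le> t" and W: "W \<in> borel_measurable (F s)"
  shows "(\<integral>\<^sup>+x. W x * ennreal (M t x) \<partial>Q) = (\<integral>\<^sup>+x. W x * ennreal (M s x) \<partial>Q)"
proof -
  interpret sigma_finite_subalgebra Q "F s" by (rule sfs)
  have "AE x in Q. ennreal (M s x) = nn_cond_exp Q (F s) (\<lambda>x. ennreal (M t x)) x"
  proof (rule nn_cond_exp_charact)
    fix A assume A: "A \<in> sets (F s)"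
    have "(\<integral>\<^sup>+x\<in>A. ennreal (M t x) \<partial>Q) = (\<integral>\<^sup>+x. ennreal (indicator A x * M t x) \<partial>Q)"
      by (rule nn_integral_cong) (auto simp: indicator_def)
    also have "\<dots> = (\<integral>\<^sup>+x. ennreal (indicator A x * M s x) \<partial>Q)" by (rule mart_set[OF assms(1) A])
    also have "\<dots> = (\<integral>\<^sup>+x\<in>A. ennreal (M s x) \<partial>Q)"
      by (rule nn_integral_cong) (auto simp: indicator_def)
    finally show "(\<integral>\<^sup>+x\<in>A. ennreal (M t x) \<partial>Q) = (\<integral>\<^sup>+x\<in>A. ennreal (M s x) \<partial>Q)" .
  next
    show "(\<lambda>x. ennreal (M t x)) \<in> borel_measurable Q" by simp
    show "(\<lambda>x. ennreal (M s x)) \<in> borel_measurable (F s)" using Mmeas by simp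
  qed
  then have "(\<integral>\<^sup>+x. W x * ennreal (M s x) \<partial>Q) = (\<integral>\<^sup>+x. W x * nn_cond_exp Q (F s) (\<lambda>x. ennreal (M t x)) x \<partial>Q)"
    by (intro nn_integral_cong_AE) (auto elim!: AE_mp)
  also have "\<dots> = (\<integral>\<^sup>+x. W x * ennreal (M t x) \<partial>Q)"
    by (rule nn_cond_exp_intg) (use W in auto)
  finally show ?thesis by simp
qed


lemma setF_le: fixes f :: "'a \<Rightarrow> real" assumes "f \<in> borel_measurable (F n)" shows "{x\<in>space Q. c \<le> f x} \<in> sets (F n)"
proof -
  have "{x\<in>space (F n). c \<le> f x} \<in> sets (F n)" using borel_measurable_le[OF borel_measurable_const assms, of c] by simp
  then show ?thesis by (simp add: spaceF)
qed

lemma setF_less: fixes f :: "'a \<Rightarrow> real" assumes "f \<in> borel_measurable (F n)" shows "{x\<in>space Q. f x < c} \<in> sets (F n)"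
proof -
  have "{x\<in>space (F n). f x < c} \<in> sets (F n)" using borel_measurable_less[OF assms borel_measurable_const, of c] by simp
  then show ?thesis by (simp add: spaceF)
qed

lemma setF_gr: fixes f :: "'a \<Rightarrow> real" assumes "f \<in> borel_measurable (F n)" shows "{x\<in>space Q. c < f x} \<in> sets (F n)"
proof -
  have "{x\<in>space (F n). c < f x} \<in> sets (F n)" using borel_measurable_less[OF borel_measurable_const assms, of c] by simp
  then show ?thesis by (simp add: spaceF)
qed

lemma ind_le_int:
  assumes "A \<in> sets Q" "A \<subseteq> {x. c \<le> M t x}" "0 \<le> c"
  shows "ennreal c * emeasure Q A \<le> (\<integral>\<^sup>+x. indicator A x * ennreal (M t x) \<partial>Q)"
proof -
  have "ennreal c * emeasure Q A = (\<integral>\<^sup>+x. ennreal c * indicator A x \<partial>Q)"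
    by (rule nn_integral_cmult_indicator[OF assms(1), symmetric])
  also have "\<dots> \<le> (\<integral>\<^sup>+x. indicator A x * ennreal (M t x) \<partial>Q)"
    using assms(2) by (intro nn_integral_mono) (auto simp: indicator_def intro: ennreal_leI)
  finally show ?thesis .
qed

lemma int_one: "(\<integral>\<^sup>+x. ennreal (M t x) \<partial>Q) = 1"
proof -
  have "(\<integral>\<^sup>+x. ennreal (M t x) \<partial>Q) = (\<integral>\<^sup>+x. 1 * ennreal (M t x) \<partial>Q)" by simp
  also have "\<dots> = (\<integral>\<^sup>+x. 1 * ennreal (M 0 x) \<partial>Q)" by (rule mart_nn) auto
  also have "\<dots> = (\<integral>\<^sup>+x. 1 \<partial>Q)" by (rule nn_integral_cong) (simp add: M0)
  also have "\<dots> = 1" by (simp add: emeasure_space_1)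
  finally show ?thesis .
qed

definition G :: "real \<Rightarrow> nat \<Rightarrow> 'a set" where
  "G c n = {x\<in>space Q. \<exists>k\<le>n. c \<le> M k x}"

lemma G_sets: "G c n \<in> sets (F n)"
proof -
  have "G c n = (\<Union>k\<in>{..n}. {x\<in>space Q. c \<le> M k x})" unfolding G_def by auto
  also have "\<dots> \<in> sets (F n)"
    by (intro sets.finite_UN) (auto intro!: setF_le MmeasF)
  finally show ?thesis .
qed

lemma doob: assumes "0 \<le> c"
  shows "ennreal c * emeasure Q (G c n) \<le> (\<integral>\<^sup>+x. indicator (G c n) x * ennreal (M n x) \<partial>Q)"
proof (induction n)
  case 0
  show ?case by (rule ind_le_int) (auto simp: G_def assms intro: setsQ[OF G_sets])
next
  case (Suc n)
  define A where "A = {x\<in>space Q. c \<le> M (Suc n) x} - G c n"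
  have As: "A \<in> sets Q" unfolding A_def
    by (intro sets.Diff setsQ[OF G_sets] setsQ[OF setF_le[OF Mmeas]])
  have Gs: "G c n \<in> sets Q" by (rule setsQ[OF G_sets])
  have GS: "G c (Suc n) = G c n \<union> A" unfolding A_def G_def by (auto simp: le_Suc_eq)
  have dis: "G c n \<inter> A = {}" unfolding A_def by auto
  have "ennreal c * emeasure Q (G c (Suc n)) = ennreal c * emeasure Q (G c n) + ennreal c * emeasure Q A"
    unfolding GS using dis As Gs by (simp add: plus_emeasure[symmetric] distrib_left)
  also have "\<dots> \<le> (\<integral>\<^sup>+x. indicator (G c n) x * ennreal (M n x) \<partial>Q) + (\<integral>\<^sup>+x. indicator A x * ennreal (M (Suc n) x) \<partial>Q)"
    by (intro add_mono Suc ind_le_int As) (auto simp: A_def assms)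
  also have "(\<integral>\<^sup>+x. indicator (G c n) x * ennreal (M n x) \<partial>Q) = (\<integral>\<^sup>+x. indicator (G c n) x * ennreal (M (Suc n) x) \<partial>Q)"
    by (rule mart_nn[symmetric]) (auto intro: G_sets borel_measurable_indicator)
  also have "(\<integral>\<^sup>+x. indicator (G c n) x * ennreal (M (Suc n) x) \<partial>Q) + (\<integral>\<^sup>+x. indicator A x * ennreal (M (Suc n) x) \<partial>Q)
     = (\<integral>\<^sup>+x. indicator (G c n) x * ennreal (M (Suc n) x) + indicator A x * ennreal (M (Suc n) x) \<partial>Q)"
    using As Gs by (intro nn_integral_add[symmetric]) auto
  also have "\<dots> = (\<integral>\<^sup>+x. indicator (G c (Suc n)) x * ennreal (M (Suc n) x) \<partial>Q)"
    unfolding GS using dis by (intro nn_integral_cong) (auto simp: indicator_def)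
  finally show ?case .
qed

lemma doob2: assumes "0 < c" shows "emeasure Q (G c n) \<le> ennreal (1/c)"
proof -
  have "ennreal c * emeasure Q (G c n) \<le> (\<integral>\<^sup>+x. indicator (G c n) x * ennreal (M n x) \<partial>Q)"
    using doob[of c n] assms by simp
  also have "\<dots> \<le> (\<integral>\<^sup>+x. ennreal (M n x) \<partial>Q)" by (intro nn_integral_mono) (auto simp: indicator_def)
  also have "\<dots> = 1" by (rule int_one)
  finally have "ennreal c * emeasure Q (G c n) \<le> 1" .
  then have "ennreal (1/c) * (ennreal c * emeasure Q (G c n)) \<le> ennreal (1/c) * 1"
    by (rule mult_left_mono) simp
  moreover have "ennreal (1/c) * ennreal c = 1" using assms by (simp add: ennreal_mult''[symmetric])
  ultimately show ?thesis by (simp add: mult.assoc[symmetric])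
qed

lemma upper:
  assumes "0 < \<alpha>"
  shows "emeasure Q {x\<in>space Q. ennreal (1/\<alpha>) \<le> (SUP t. ennreal (M t x))} \<le> ennreal \<alpha>"
proof -
  define T where "T = {x\<in>space Q. ennreal (1/\<alpha>) \<le> (SUP t. ennreal (M t x))}"
  have Ts: "T \<in> sets Q" unfolding T_def by measurable
  have "measure Q T \<le> \<alpha>"
  proof (rule field_le_epsilon)
    fix d :: real assume d: "0 < d"
    define c where "c = 1 / (\<alpha> + d)"
    have c: "0 < c" "c < 1/\<alpha>" using d assms by (auto simp: c_def field_simps)
    have sub: "T \<subseteq> (\<Union>n. G c n)"
    proof
      fix x assume x: "x \<in> T"
      have "ennreal c < ennreal (1/\<alpha>)" using c assms by (intro ennreal_lessI) auto
      also have "\<dots> \<le> (SUP t. ennreal (M t x))" using x unfolding T_def by auto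
      finally have "ennreal c < (SUP t. ennreal (M t x))" .
      then obtain t where "ennreal c < ennreal (M t x)" by (auto simp: less_SUP_iff)
      then have "c < M t x" using c by (auto simp: ennreal_less_iff)
      then show "x \<in> (\<Union>n. G c n)" using x unfolding T_def G_def by (auto intro!: exI[of _ t])
    qed
    have "emeasure Q T \<le> emeasure Q (\<Union>n. G c n)"
      by (rule emeasure_mono[OF sub]) (auto intro!: setsQ[OF G_sets])
    also have "\<dots> = (SUP n. emeasure Q (G c n))"
    proof (rule SUP_emeasure_incseq[symmetric])
      show "range (G c) \<subseteq> sets Q" using G_sets setsQ by auto
      show "incseq (G c)" unfolding incseq_def G_def by (auto intro: order_trans)
    qed
    also have "\<dots> \<le> ennreal (1/c)" by (rule SUP_least) (rule doob2[OF c(1)])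
    finally have "emeasure Q T \<le> ennreal (\<alpha> + d)" using c by (simp add: c_def)
    then show "measure Q T \<le> \<alpha> + d" using d assms
      by (simp add: emeasure_eq_measure del: ennreal_plus)
  qed
  then show ?thesis unfolding T_def[symmetric] by (auto simp: emeasure_eq_measure intro: ennreal_leI)
qed

lemma setF_eq: fixes f :: "'a \<Rightarrow> real" assumes "f \<in> borel_measurable (F n)" shows "{x\<in>space Q. f x = c} \<in> sets (F n)"
proof -
  have "{x\<in>space (F n). f x = c} \<in> sets (F n)" using borel_measurable_eq[OF assms borel_measurable_const, of c] by simp
  then show ?thesis by (simp add: spaceF)
qed

lemma ratio_meas: "ratio M t \<in> borel_measurable (F t)"
proof -
  have [measurable]: "M (t-1) \<in> borel_measurable (F t)" "M t \<in> borel_measurable (F t)" using MmeasF by auto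
  have "ratio M t = (\<lambda>\<omega>. if M (t - 1) \<omega> = 0 \<and> M t \<omega> = 0 then 1 else M t \<omega> / M (t - 1) \<omega>)"
    by (auto simp: ratio_def fun_eq_iff)
  also have "\<dots> \<in> borel_measurable (F t)" by measurable
  finally show ?thesis .
qed

lemma ind_meas: "{x\<in>space N. P x} \<in> sets N \<Longrightarrow> (\<lambda>x. indicator {y. P y} x :: ennreal) \<in> borel_measurable N"
  using borel_measurable_indicator_iff[of "{y. P y}" N] by (simp add: Int_def conj_commute)

definition B :: "real \<Rightarrow> nat \<Rightarrow> 'a set" where
  "B c n = {x\<in>space Q. \<forall>s\<le>n. M s x < c}"
definition C :: "real \<Rightarrow> nat \<Rightarrow> 'a set" where
  "C c t = {x\<in>space Q. c \<le> M t x \<and> (\<forall>s<t. M s x < c)}"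

lemma B_eq: "B c n = space Q - G c n" unfolding B_def G_def by (auto simp: not_le)

lemma B_sets: "B c n \<in> sets (F n)"
  unfolding B_eq using G_sets sets.top[of "F n"] by (auto simp: spaceF)

lemma C_Suc: "C c (Suc n) = B c n - B c (Suc n)"
  unfolding B_def C_def by (auto simp: less_Suc_eq_le le_Suc_eq not_less)

lemma C_sets: "C c (Suc n) \<in> sets (F (Suc n))"
  unfolding C_Suc by (intro sets.Diff B_sets setsF[OF B_sets]) auto

lemma stop_id:
  assumes c: "1 < c"
  shows "(\<integral>\<^sup>+x. indicator (B c n) x * ennreal (M n x) \<partial>Q)
    + (\<Sum>t<n. \<integral>\<^sup>+x. indicator (C c (Suc t)) x * ennreal (M (Suc t) x) \<partial>Q) = 1"
proof (induction n)
  case 0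
  have "(\<integral>\<^sup>+x. indicator (B c 0) x * ennreal (M 0 x) \<partial>Q) = (\<integral>\<^sup>+x. ennreal (M 0 x) \<partial>Q)"
    by (rule nn_integral_cong) (auto simp: B_def M0 c indicator_def)
  then show ?case by (simp add: int_one)
next
  case (Suc n)
  have Bs: "B c n \<in> sets Q" "B c (Suc n) \<in> sets Q" "C c (Suc n) \<in> sets Q"
    using B_sets C_sets setsQ by auto
  have "(\<integral>\<^sup>+x. indicator (B c n) x * ennreal (M n x) \<partial>Q) = (\<integral>\<^sup>+x. indicator (B c n) x * ennreal (M (Suc n) x) \<partial>Q)"
    by (rule mart_nn[symmetric]) (auto intro: B_sets borel_measurable_indicator)
  also have "\<dots> = (\<integral>\<^sup>+x. indicator (B c (Suc n)) x * ennreal (M (Suc n) x) + indicator (C c (Suc n)) x * ennreal (M (Suc n) x) \<partial>Q)"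
    by (rule nn_integral_cong) (auto simp: C_Suc indicator_def B_def)
  also have "\<dots> = (\<integral>\<^sup>+x. indicator (B c (Suc n)) x * ennreal (M (Suc n) x) \<partial>Q) + (\<integral>\<^sup>+x. indicator (C c (Suc n)) x * ennreal (M (Suc n) x) \<partial>Q)"
    using Bs by (intro nn_integral_add) auto
  finally show ?case using Suc.IH by (simp add: add_ac)
qed

lemma overshoot:
  assumes c: "1 < c" and eps: "0 \<le> \<epsilon>"
  and H: "\<forall>\<beta>::'a \<Rightarrow> real.
              \<beta> \<in> borel_measurable (F (Suc p - 1)) \<and> (\<forall>\<omega>\<in>space Q. \<beta> \<omega> > 1) \<longrightarrow>
              (AE \<omega> in Q.
                 nn_cond_exp Q (F (Suc p - 1))
                   (\<lambda>x. ennreal (ratio M (Suc p) x * indicator {y. ratio M (Suc p) y \<ge> \<beta> y} x)) \<omega>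
                 \<le> ennreal (\<beta> \<omega> * (1 + \<epsilon>)) *
                   nn_cond_exp Q (F (Suc p - 1))
                   (\<lambda>x. indicator {y. ratio M (Suc p) y \<ge> \<beta> y} x) \<omega>)"
  shows "(\<integral>\<^sup>+x. indicator (C c (Suc p)) x * ennreal (M (Suc p) x) \<partial>Q) \<le> ennreal (c * (1 + \<epsilon>)) * emeasure Q (C c (Suc p))"
proof -
  let ?t = "Suc p"
  interpret sigma_finite_subalgebra Q "F p" by (rule sfs)
  define \<beta> where "\<beta> x = (if 0 < M p x \<and> M p x < c then c / M p x else 2)" for x
  have [measurable]: "M p \<in> borel_measurable (F p)" by (rule Mmeas)
  have bm: "\<beta> \<in> borel_measurable (F p)" unfolding \<beta>_def by measurable
  have b1: "\<forall>\<omega>\<in>space Q. \<beta> \<omega> > 1" unfolding \<beta>_def by (auto simp: field_simps)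
  have AE1: "AE \<omega> in Q.
                 nn_cond_exp Q (F p)
                   (\<lambda>x. ennreal (ratio M ?t x * indicator {y. ratio M ?t y \<ge> \<beta> y} x)) \<omega>
                 \<le> ennreal (\<beta> \<omega> * (1 + \<epsilon>)) *
                   nn_cond_exp Q (F p)
                   (\<lambda>x. indicator {y. ratio M ?t y \<ge> \<beta> y} x) \<omega>"
    by (rule mp[OF spec[OF H[unfolded diff_Suc_1], of \<beta>] conjI[OF bm b1]])
  define D where "D = B c p \<inter> {x\<in>space Q. 0 < M p x}"
  have Ds: "D \<in> sets (F p)" unfolding D_def
    by (intro sets.Int B_sets setF_gr[OF Mmeas])
  define E where "E = C c ?t \<inter> {x\<in>space Q. 0 < M p x}"
  have Es: "E \<in> sets Q" unfolding E_def
    by (intro sets.Int setsQ[OF C_sets[of c p]] setsQ[OF setF_gr[OF Mmeas]])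
  define W where "W x = indicator D x * ennreal (M p x)" for x
  have Wm: "W \<in> borel_measurable (F p)" unfolding W_def using Ds by measurable
  have rm: "ratio M ?t \<in> borel_measurable Q" by (rule measQ[OF ratio_meas])
  have setm: "{x\<in>space Q. \<beta> x \<le> ratio M ?t x} \<in> sets Q"
    using rm measQ[OF bm] by measurable
  have fm: "(\<lambda>x. ennreal (ratio M ?t x * indicator {y. ratio M ?t y \<ge> \<beta> y} x)) \<in> borel_measurable Q"
    using rm setm by (intro measurable_compose[OF _ measurable_ennreal] borel_measurable_times)
       (auto simp: borel_measurable_indicator_iff Int_def conj_commute)
  have gm: "(\<lambda>x. indicator {y. ratio M ?t y \<ge> \<beta> y} x :: ennreal) \<in> borel_measurable Q"
    by (rule ind_meas[OF setm])
  have W2m: "(\<lambda>x. W x * ennreal (\<beta> x * (1 + \<epsilon>))) \<in> borel_measurable (F p)"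
    using Wm bm by measurable
  have "(\<integral>\<^sup>+x. W x * ennreal (ratio M ?t x * indicator {y. ratio M ?t y \<ge> \<beta> y} x) \<partial>Q)
      = (\<integral>\<^sup>+x. W x * nn_cond_exp Q (F p) (\<lambda>x. ennreal (ratio M ?t x * indicator {y. ratio M ?t y \<ge> \<beta> y} x)) x \<partial>Q)"
    by (rule nn_cond_exp_intg[symmetric, OF Wm fm])
  also have "\<dots> \<le> (\<integral>\<^sup>+x. (W x * ennreal (\<beta> x * (1 + \<epsilon>))) * nn_cond_exp Q (F p) (\<lambda>x. indicator {y. ratio M ?t y \<ge> \<beta> y} x) x \<partial>Q)"
    using AE1 by (intro nn_integral_mono_AE) (auto elim!: AE_mp intro!: mult_left_mono simp: mult.assoc)
  also have "\<dots> = (\<integral>\<^sup>+x. (W x * ennreal (\<beta> x * (1 + \<epsilon>))) * indicator {y. ratio M ?t y \<ge> \<beta> y} x \<partial>Q)"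
    by (rule nn_cond_exp_intg[OF W2m gm])
  finally have main: "(\<integral>\<^sup>+x. W x * ennreal (ratio M ?t x * indicator {y. ratio M ?t y \<ge> \<beta> y} x) \<partial>Q)
     \<le> (\<integral>\<^sup>+x. (W x * ennreal (\<beta> x * (1 + \<epsilon>))) * indicator {y. ratio M ?t y \<ge> \<beta> y} x \<partial>Q)" .
  have pt: "x \<in> D \<Longrightarrow> ratio M ?t x = M ?t x / M p x \<and> (\<beta> x \<le> ratio M ?t x \<longleftrightarrow> c \<le> M ?t x) \<and> \<beta> x = c / M p x" for x
    unfolding D_def B_def \<beta>_def ratio_def by (auto simp: divide_le_cancel)
  have ED: "x \<in> E \<longleftrightarrow> x \<in> D \<and> c \<le> M ?t x" for x
    unfolding E_def D_def B_def C_def by (auto simp: less_Suc_eq_le)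
  have "(\<integral>\<^sup>+x. W x * ennreal (ratio M ?t x * indicator {y. ratio M ?t y \<ge> \<beta> y} x) \<partial>Q)
      = (\<integral>\<^sup>+x. indicator E x * ennreal (M ?t x) \<partial>Q)"
  proof (rule nn_integral_cong)
    fix x assume x: "x \<in> space Q"
    show "W x * ennreal (ratio M ?t x * indicator {y. ratio M ?t y \<ge> \<beta> y} x) = indicator E x * ennreal (M ?t x)"
    proof (cases "x \<in> D")
      case True
      then have p0: "0 < M p x" unfolding D_def by auto
      have e1: "ennreal (M p x) * ennreal (M ?t x / M p x) = ennreal (M ?t x)"
        using p0 Mnn[OF x, of ?t] by (subst ennreal_mult[symmetric]) auto
      show ?thesis using pt[OF True] ED[of x] True p0 e1
        by (auto simp: W_def indicator_def)
    next
      case False then show ?thesis using ED[of x] by (simp add: W_def)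
    qed
  qed
  moreover have "(\<integral>\<^sup>+x. (W x * ennreal (\<beta> x * (1 + \<epsilon>))) * indicator {y. ratio M ?t y \<ge> \<beta> y} x \<partial>Q)
      = (\<integral>\<^sup>+x. ennreal (c * (1 + \<epsilon>)) * indicator E x \<partial>Q)"
  proof (rule nn_integral_cong)
    fix x assume x: "x \<in> space Q"
    show "(W x * ennreal (\<beta> x * (1 + \<epsilon>))) * indicator {y. ratio M ?t y \<ge> \<beta> y} x = ennreal (c * (1 + \<epsilon>)) * indicator E x"
    proof (cases "x \<in> D")
      case True
      then have p0: "0 < M p x" unfolding D_def by auto
      have "M p x * (c / M p x * (1 + \<epsilon>)) = c * (1 + \<epsilon>)" using p0 by (simp add: field_simps)
      then have e2: "ennreal (M p x) * ennreal (c / M p x * (1 + \<epsilon>)) = ennreal (c * (1 + \<epsilon>))"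
        using p0 c eps by (subst ennreal_mult[symmetric]) auto
      show ?thesis using pt[OF True] ED[of x] True p0 e2
        by (auto simp: W_def indicator_def)
    next
      case False then show ?thesis using ED[of x] by (simp add: W_def)
    qed
  qed
  moreover have "(\<integral>\<^sup>+x. ennreal (c * (1 + \<epsilon>)) * indicator E x \<partial>Q) = ennreal (c * (1 + \<epsilon>)) * emeasure Q E"
    by (rule nn_integral_cmult_indicator[OF Es])
  ultimately have E1: "(\<integral>\<^sup>+x. indicator E x * ennreal (M ?t x) \<partial>Q) \<le> ennreal (c * (1 + \<epsilon>)) * emeasure Q E"
    using main by simp
  define Z where "Z = {x\<in>space Q. M p x = 0}"
  have Zs: "Z \<in> sets (F p)" unfolding Z_def by (rule setF_eq[OF Mmeas])
  have Z0: "(\<integral>\<^sup>+x. indicator Z x * ennreal (M ?t x) \<partial>Q) = 0"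
  proof -
    have "(\<integral>\<^sup>+x. indicator Z x * ennreal (M ?t x) \<partial>Q) = (\<integral>\<^sup>+x. indicator Z x * ennreal (M p x) \<partial>Q)"
      by (rule mart_nn) (auto intro: Zs borel_measurable_indicator)
    also have "\<dots> = (\<integral>\<^sup>+x. 0 \<partial>Q)" by (rule nn_integral_cong) (simp add: Z_def indicator_def)
    also have "\<dots> = 0" by simp
    finally show ?thesis .
  qed
  have "(\<integral>\<^sup>+x. indicator (C c ?t) x * ennreal (M ?t x) \<partial>Q)
     \<le> (\<integral>\<^sup>+x. indicator E x * ennreal (M ?t x) + indicator Z x * ennreal (M ?t x) \<partial>Q)"
  proof (rule nn_integral_mono)
    fix x assume x: "x \<in> space Q"
    show "indicator (C c ?t) x * ennreal (M ?t x) \<le> indicator E x * ennreal (M ?t x) + indicator Z x * ennreal (M ?t x)"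
      using Mnn[OF x, of p] x by (cases "M p x = 0") (auto simp: indicator_def E_def Z_def)
  qed
  also have "\<dots> = (\<integral>\<^sup>+x. indicator E x * ennreal (M ?t x) \<partial>Q) + (\<integral>\<^sup>+x. indicator Z x * ennreal (M ?t x) \<partial>Q)"
    using Es setsQ[OF Zs] by (intro nn_integral_add) auto
  also have "\<dots> \<le> ennreal (c * (1 + \<epsilon>)) * emeasure Q E" using E1 Z0 by simp
  also have "\<dots> \<le> ennreal (c * (1 + \<epsilon>)) * emeasure Q (C c ?t)"
    using setsQ[OF C_sets] by (intro mult_left_mono emeasure_mono) (auto simp: E_def)
  finally show ?thesis .
qed

lemma key_ineq:
  fixes u L :: real assumes u: "0 \<le> u" and L: "1 \<le> L"
  shows "u * (L + min 1 ((u^2-1)^2)/72) \<le> L*(1+u^2)/2"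
proof -
  have k: "u * min 1 ((u^2-1)^2) / 72 \<le> (u-1)^2/2"
  proof (cases "u \<le> 2")
    case True
    have e: "(u^2-1)^2 = (u-1)^2*(u+1)^2" by (simp add: power2_eq_square algebra_simps)
    have "(u+1)^2 \<le> 3^2" using True u by (intro power_mono) auto
    then have "(u^2-1)^2 \<le> (u-1)^2 * 9" unfolding e by (intro mult_left_mono) auto
    then have "min 1 ((u^2-1)^2) \<le> (u-1)^2 * 9" by linarith
    then have "u * min 1 ((u^2-1)^2) \<le> 2 * ((u-1)^2 * 9)"
      using True u by (intro mult_mono) auto
    then show ?thesis using zero_le_power2[of "u-1"] by linarith
  next
    case False
    have "u * min 1 ((u^2-1)^2) \<le> u" using u by (intro mult_left_le) auto
    moreover have "u - 1 \<le> (u-1)^2" using False by (simp add: power2_eq_square)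
    ultimately show ?thesis using False by linarith
  qed
  have "L*(1+u^2)/2 - u*L = L*((u-1)^2/2)" by (simp add: power2_eq_square algebra_simps)
  moreover have "(u-1)^2/2 \<le> L*((u-1)^2/2)" using L by (simp add: mult_le_cancel_right1)
  ultimately show ?thesis using k by (simp add: algebra_simps)
qed

lemma step_real:
  fixes a b L :: real assumes a: "0 < a" and b: "0 \<le> b" and L: "1 \<le> L"
  shows "sqrt b * (L + min 1 ((b/a - 1)^2)/72) \<le> L * sqrt a / 2 + L / (2 * sqrt a) * b"
proof -
  define u where "u = sqrt (b/a)"
  have u: "0 \<le> u" "u^2 = b/a" using a b by (auto simp: u_def)
  have sb: "sqrt b = sqrt a * u" using a b by (simp add: u_def real_sqrt_divide)
  have "sqrt b * (L + min 1 ((b/a - 1)^2)/72) = sqrt a * (u * (L + min 1 ((u^2 - 1)^2)/72))"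
    using u sb by simp
  also have "\<dots> \<le> sqrt a * (L*(1+u^2)/2)" using key_ineq[OF u(1) L] a by (intro mult_left_mono) auto
  also have "\<dots> = L * sqrt a / 2 + L / (2 * sqrt a) * b"
  proof -
    have g: "s * (L*(1+b/s^2)/2) = L * s / 2 + L / (2 * s) * b" if "0 < s" for s :: real
      using that by (simp add: field_simps power2_eq_square)
    have "(sqrt a)^2 = a" using a by simp
    then show ?thesis using g[of "sqrt a"] a unfolding u(2) by simp
  qed
  finally show ?thesis .
qed

definition mm :: "nat \<Rightarrow> 'a \<Rightarrow> real" where "mm s = (\<lambda>x. min 1 ((ratio M s x - 1)^2))"
definition Qs :: "nat \<Rightarrow> 'a \<Rightarrow> real" where "Qs n = (\<lambda>x. \<Sum>t<n. mm (Suc t) x)"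
definition A :: "nat \<Rightarrow> 'a \<Rightarrow> real" where "A n = (\<lambda>x. sqrt (M n x) * (1 + Qs n x / 72))"

lemma ratioQ[measurable]: "ratio M t \<in> borel_measurable Q" by (rule measQ[OF ratio_meas])

lemma Qs_meas: "Qs n \<in> borel_measurable (F n)"
proof -
  have *: "mm (Suc t) \<in> borel_measurable (F n)" if "t < n" for t
  proof -
    have [measurable]: "ratio M (Suc t) \<in> borel_measurable (F n)" using measF[OF ratio_meas] that by simp
    show ?thesis unfolding mm_def by measurable
  qed
  show ?thesis unfolding Qs_def by (rule borel_measurable_sum) (use * in auto)
qed

lemma Qs_nn: "0 \<le> Qs n x" unfolding Qs_def mm_def by (intro sum_nonneg) auto

lemma Qs_mono: "m \<le> n \<Longrightarrow> Qs m x \<le> Qs n x"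
  unfolding Qs_def mm_def by (intro sum_mono2) auto

lemma A_nn: "x \<in> space Q \<Longrightarrow> 0 \<le> A n x" unfolding A_def using Qs_nn[of n x] Mnn by simp

lemma A_meas: "A n \<in> borel_measurable (F n)"
  using Qs_meas[of n] Mmeas[of n] unfolding A_def by measurable

lemma A_step: "(\<integral>\<^sup>+x. ennreal (A (Suc n) x) \<partial>Q) \<le> (\<integral>\<^sup>+x. ennreal (A n x) \<partial>Q)"
proof -
  define L where "L x = 1 + Qs n x / 72" for x
  define P where "P = {x\<in>space Q. 0 < M n x}"
  define Z where "Z = {x\<in>space Q. M n x = 0}"
  have [measurable]: "M n \<in> borel_measurable (F n)" "Qs n \<in> borel_measurable (F n)"
    by (rule Mmeas, rule Qs_meas)
  have Lm[measurable]: "L \<in> borel_measurable (F n)" unfolding L_def by measurable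
  have Ps[measurable]: "P \<in> sets (F n)" unfolding P_def by (rule setF_gr[OF Mmeas])
  have Zs[measurable]: "Z \<in> sets (F n)" unfolding Z_def by (rule setF_eq[OF Mmeas])
  have L1: "1 \<le> L x" for x using Qs_nn[of n x] by (simp add: L_def)
  define f1 where "f1 x = indicator P x * (L x * sqrt (M n x) / 2)" for x
  define f2 where "f2 x = indicator P x * (L x / (2 * sqrt (M n x)))" for x
  define f3 where "f3 x = indicator Z x * A (Suc n) x" for x
  have f1m: "f1 \<in> borel_measurable Q" unfolding f1_def using measQ[OF Lm] setsQ[OF Ps] by measurable
  have f2m: "f2 \<in> borel_measurable (F n)" unfolding f2_def by measurable
  have f3m: "f3 \<in> borel_measurable Q" unfolding f3_def using measQ[OF A_meas] setsQ[OF Zs] by measurable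
  have pt: "ennreal (A (Suc n) x) \<le> ennreal (f1 x) + ennreal (f2 x) * ennreal (M (Suc n) x) + ennreal (f3 x)"
    if x: "x \<in> space Q" for x
  proof (cases "M n x = 0")
    case True
    then show ?thesis using x by (simp add: f1_def f2_def f3_def P_def Z_def)
  next
    case False
    then have pos: "0 < M n x" using Mnn[OF x, of n] by simp
    have r: "ratio M (Suc n) x = M (Suc n) x / M n x" using False by (simp add: ratio_def)
    have Qs: "Qs (Suc n) x = Qs n x + min 1 ((M (Suc n) x / M n x - 1)^2)"
      by (simp add: Qs_def mm_def r)
    have "A (Suc n) x = sqrt (M (Suc n) x) * (L x + min 1 ((M (Suc n) x / M n x - 1)^2) / 72)"
      by (simp add: A_def Qs L_def algebra_simps add_divide_distrib)
    also have "\<dots> \<le> L x * sqrt (M n x) / 2 + L x / (2 * sqrt (M n x)) * M (Suc n) x"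
      by (rule step_real[OF pos Mnn[OF x] L1])
    also have "\<dots> = f1 x + f2 x * M (Suc n) x" using pos x by (simp add: f1_def f2_def P_def)
    finally have "A (Suc n) x \<le> f1 x + f2 x * M (Suc n) x" .
    moreover have "0 \<le> f1 x" "0 \<le> f2 x" using L1[of x] by (auto simp: f1_def f2_def indicator_def P_def)
    moreover have "f3 x = 0" using pos by (simp add: f3_def Z_def)
    ultimately show ?thesis using Mnn[OF x]
      by (simp add: ennreal_plus[symmetric] ennreal_mult[symmetric] del: ennreal_plus)
  qed
  have "(\<integral>\<^sup>+x. ennreal (A (Suc n) x) \<partial>Q) \<le> (\<integral>\<^sup>+x. ennreal (f1 x) + ennreal (f2 x) * ennreal (M (Suc n) x) + ennreal (f3 x) \<partial>Q)"
    using pt by (intro nn_integral_mono) auto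
  also have "\<dots> = (\<integral>\<^sup>+x. ennreal (f1 x) \<partial>Q) + (\<integral>\<^sup>+x. ennreal (f2 x) * ennreal (M (Suc n) x) \<partial>Q) + (\<integral>\<^sup>+x. ennreal (f3 x) \<partial>Q)"
    using f1m measQ[OF f2m] f3m by (simp add: nn_integral_add)
  also have "(\<integral>\<^sup>+x. ennreal (f3 x) \<partial>Q) = 0"
  proof -
    have "(\<integral>\<^sup>+x. indicator Z x * ennreal (M (Suc n) x) \<partial>Q) = (\<integral>\<^sup>+x. indicator Z x * ennreal (M n x) \<partial>Q)"
      by (rule mart_nn) auto
    also have "\<dots> = (\<integral>\<^sup>+x. 0 \<partial>Q)" by (rule nn_integral_cong) (simp add: Z_def indicator_def)
    also have "\<dots> = 0" by simp
    finally have "AE x in Q. indicator Z x * ennreal (M (Suc n) x) = 0"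
      using setsQ[OF Zs] by (subst nn_integral_0_iff_AE[symmetric]) auto
    then have "AE x in Q. ennreal (f3 x) = 0"
    proof eventually_elim
      fix x assume h: "indicator Z x * ennreal (M (Suc n) x) = 0"
      show "ennreal (f3 x) = 0"
      proof (cases "x \<in> Z")
        case True
        then have xs: "x \<in> space Q" by (simp add: Z_def)
        have "ennreal (M (Suc n) x) = 0" using h True by simp
        then have "M (Suc n) x = 0" using Mnn[OF xs, of "Suc n"] by simp
        then show ?thesis by (simp add: f3_def A_def)
      next
        case False then show ?thesis by (simp add: f3_def)
      qed
    qed
    then show ?thesis by (simp add: nn_integral_0_iff_AE[OF measurable_compose[OF f3m measurable_ennreal]])
  qed
  also have "(\<integral>\<^sup>+x. ennreal (f2 x) * ennreal (M (Suc n) x) \<partial>Q) = (\<integral>\<^sup>+x. ennreal (f2 x) * ennreal (M n x) \<partial>Q)"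
    by (rule mart_nn) (use f2m in auto)
  also have "(\<integral>\<^sup>+x. ennreal (f1 x) \<partial>Q) + (\<integral>\<^sup>+x. ennreal (f2 x) * ennreal (M n x) \<partial>Q) + 0
      = (\<integral>\<^sup>+x. ennreal (f1 x) + ennreal (f2 x) * ennreal (M n x) \<partial>Q)"
    using f1m measQ[OF f2m] by (simp add: nn_integral_add)
  also have "\<dots> \<le> (\<integral>\<^sup>+x. ennreal (A n x) \<partial>Q)"
  proof (rule nn_integral_mono)
    fix x assume x: "x \<in> space Q"
    show "ennreal (f1 x) + ennreal (f2 x) * ennreal (M n x) \<le> ennreal (A n x)"
    proof (cases "M n x = 0")
      case True then show ?thesis using x A_nn[OF x, of n] by (simp add: f1_def f2_def P_def)
    next
      case False
      then have pos: "0 < M n x" using Mnn[OF x, of n] by simp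
      have "sqrt (M n x) * sqrt (M n x) = M n x" using pos by simp
      then have "f1 x + f2 x * M n x = A n x" using pos x
        by (simp add: f1_def f2_def P_def A_def L_def field_simps)
      moreover have "0 \<le> f1 x" "0 \<le> f2 x" using L1[of x] by (auto simp: f1_def f2_def indicator_def P_def)
      ultimately show ?thesis using Mnn[OF x]
        by (simp add: ennreal_plus[symmetric] ennreal_mult[symmetric] del: ennreal_plus)
    qed
  qed
  finally show ?thesis .
qed

lemma A_le1: "(\<integral>\<^sup>+x. ennreal (A n x) \<partial>Q) \<le> 1"
proof (induction n)
  case 0
  have "(\<integral>\<^sup>+x. ennreal (A 0 x) \<partial>Q) = (\<integral>\<^sup>+x. 1 \<partial>Q)"
    by (rule nn_integral_cong) (simp add: A_def Qs_def M0)
  then show ?case by (simp add: emeasure_space_1)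
next
  case (Suc n) then show ?case using A_step order_trans by blast
qed

lemma tail_bound:
  assumes K: "0 \<le> K" and c: "0 < c"
  shows "(\<integral>\<^sup>+x. indicator (B c n) x * ennreal (M n x) \<partial>Q)
     \<le> ennreal c * emeasure Q {x\<in>space Q. Qs n x < K} + ennreal (sqrt c / (1 + K/72))"
proof -
  define Ls where "Ls = {x\<in>space Q. Qs n x < K}"
  have Ls: "Ls \<in> sets Q" unfolding Ls_def by (rule setsQ[OF setF_less[OF Qs_meas]])
  define k where "k = sqrt c / (1 + K/72)"
  have k0: "0 \<le> k" using K c by (simp add: k_def)
  have "(\<integral>\<^sup>+x. indicator (B c n) x * ennreal (M n x) \<partial>Q)
     \<le> (\<integral>\<^sup>+x. ennreal c * indicator Ls x + ennreal k * ennreal (A n x) \<partial>Q)"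
  proof (rule nn_integral_mono)
    fix x assume x: "x \<in> space Q"
    show "indicator (B c n) x * ennreal (M n x) \<le> ennreal c * indicator Ls x + ennreal k * ennreal (A n x)"
    proof (cases "x \<in> B c n")
      case False then show ?thesis by simp
    next
      case True
      then have Mc: "M n x < c" unfolding B_def by auto
      have M0': "0 \<le> M n x" using Mnn[OF x] .
      show ?thesis
      proof (cases "x \<in> Ls")
        case True
        have "ennreal (M n x) \<le> ennreal c" using Mc by (intro ennreal_leI) simp
        then show ?thesis using True \<open>x \<in> B c n\<close> by (auto intro: add_increasing2)
      next
        case False
        then have QK: "K \<le> Qs n x" using x unfolding Ls_def by auto
        have s1: "sqrt (M n x) \<le> sqrt c" using Mc M0' by simp
        have s2: "sqrt (M n x) * (1 + K/72) \<le> A n x"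
          unfolding A_def using QK K M0' by (intro mult_left_mono) auto
        then have s3: "sqrt (M n x) \<le> A n x / (1 + K/72)" using K by (simp add: field_simps)
        have "M n x = sqrt (M n x) * sqrt (M n x)" using M0' by simp
        also have "\<dots> \<le> sqrt c * sqrt (M n x)" using s1 M0' by (intro mult_right_mono) auto
        also have "\<dots> \<le> sqrt c * (A n x / (1 + K/72))" using s3 c by (intro mult_left_mono) auto
        finally have "M n x \<le> k * A n x" by (simp add: k_def)
        then have "ennreal (M n x) \<le> ennreal k * ennreal (A n x)"
          using k0 A_nn[OF x, of n] by (subst ennreal_mult[symmetric]) (auto intro: ennreal_leI)
        then show ?thesis using \<open>x \<in> B c n\<close> by (simp add: add_increasing)
      qed
    qed
  qed
  also have "\<dots> = ennreal c * emeasure Q Ls + ennreal k * (\<integral>\<^sup>+x. ennreal (A n x) \<partial>Q)"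
    using Ls measQ[OF A_meas] by (simp add: nn_integral_add nn_integral_cmult nn_integral_cmult_indicator)
  also have "\<dots> \<le> ennreal c * emeasure Q Ls + ennreal k * 1"
    by (intro add_left_mono mult_left_mono A_le1) auto
  finally show ?thesis by (simp add: Ls_def k_def)
qed

lemma Qs_limit:
  assumes H1: "measure Q {x\<in>space Q. (\<Sum>t. ennreal ((ratio M (Suc t) x - 1)\<^sup>2)) = \<infinity>} = 1"
  shows "(INF n. emeasure Q {x\<in>space Q. Qs n x < K}) = 0"
proof -
  define Hs where "Hs = {x\<in>space Q. (\<Sum>t. ennreal ((ratio M (Suc t) x - 1)\<^sup>2)) = \<infinity>}"
  have Hs: "Hs \<in> sets Q" unfolding Hs_def by measurable
  have Ls: "\<And>n. {x\<in>space Q. Qs n x < K} \<in> sets Q" by (rule setsQ[OF setF_less[OF Qs_meas]])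
  have "(INF n. emeasure Q {x\<in>space Q. Qs n x < K}) = emeasure Q (\<Inter>n. {x\<in>space Q. Qs n x < K})"
  proof (rule INF_emeasure_decseq)
    show "range (\<lambda>n. {x\<in>space Q. Qs n x < K}) \<subseteq> sets Q" using Ls by auto
    show "decseq (\<lambda>n. {x\<in>space Q. Qs n x < K})"
      unfolding decseq_def
    proof (intro allI impI subsetI)
      fix m n x assume "m \<le> n" "x \<in> {x\<in>space Q. Qs n x < K}"
      then show "x \<in> {x\<in>space Q. Qs m x < K}" using Qs_mono[of m n x] by auto
    qed
    show "\<And>n. emeasure Q {x\<in>space Q. Qs n x < K} \<noteq> \<infinity>" by (simp add: emeasure_eq_measure)
  qed
  also have "\<dots> \<le> emeasure Q (space Q - Hs)"
  proof (rule emeasure_mono)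
    show "space Q - Hs \<in> sets Q" using Hs by (rule sets.compl_sets)
    show "(\<Inter>n. {x\<in>space Q. Qs n x < K}) \<subseteq> space Q - Hs"
    proof (rule subsetI)
      fix x assume x: "x \<in> (\<Inter>n. {x\<in>space Q. Qs n x < K})"
      have xs: "x \<in> space Q" using INT_D[OF x, of 0] by simp
      have bd: "Qs n x < K" for n using INT_D[OF x, of n] by simp
      define a where "a t = (ratio M (Suc t) x - 1)\<^sup>2" for t
      have a0: "\<And>i. 0 \<le> a i" by (simp add: a_def)
      have b: "Qs n x = (\<Sum>t<n. min 1 (a t))" for n by (simp add: Qs_def mm_def a_def)
      have sb: "summable (\<lambda>t. min 1 (a t))"
      proof (rule summableI_nonneg_bounded[where x=K])
        show "\<And>n. 0 \<le> min 1 (a n)" using a0 by simp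
        fix n show "(\<Sum>i<n. min 1 (a i)) \<le> K" using bd[of n] unfolding b by simp
      qed
      then have "(\<lambda>t. min 1 (a t)) \<longlonglongrightarrow> 0" by (rule summable_LIMSEQ_zero)
      then have "eventually (\<lambda>t. min 1 (a t) < 1) sequentially" by (rule order_tendstoD(2)) simp
      then have "eventually (\<lambda>t. a t = min 1 (a t)) sequentially"
        by eventually_elim (simp add: min_def split: if_splits)
      then have "summable a = summable (\<lambda>t. min 1 (a t))" by (rule summable_cong)
      then have "summable a" using sb by simp
      then have "(\<Sum>t. ennreal (a t)) = ennreal (\<Sum>t. a t)" by (rule suminf_ennreal2[OF a0])
      then have "(\<Sum>t. ennreal (a t)) \<noteq> \<infinity>" by simp
      then have ne: "(\<Sum>t. ennreal ((ratio M (Suc t) x - 1)\<^sup>2)) \<noteq> \<infinity>" unfolding a_def .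
      show "x \<in> space Q - Hs"
      proof (rule DiffI[OF xs])
        show "x \<notin> Hs"
        proof
          assume "x \<in> Hs"
          then have "(\<Sum>t. ennreal ((ratio M (Suc t) x - 1)\<^sup>2)) = \<infinity>"
            unfolding Hs_def mem_Collect_eq by (rule conjunct2)
          with ne show False by (rule notE)
        qed
      qed
    qed
  qed
  also have "emeasure Q (space Q - Hs) = 0"
  proof -
    have "measure Q Hs = 1" using H1 unfolding Hs_def .
    then have "measure Q (space Q - Hs) = 0" using prob_compl[OF Hs] by simp
    then show ?thesis by (simp add: emeasure_eq_measure)
  qed
  finally have "(INF n. emeasure Q {x\<in>space Q. Qs n x < K}) \<le> 0" .
  then show ?thesis by (simp only: le_zero_eq)
qed

lemma C_disj:
  assumes "i < j" shows "C c (Suc i) \<inter> C c (Suc j) = {}"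
proof (rule equals0I)
  fix x assume "x \<in> C c (Suc i) \<inter> C c (Suc j)"
  then have 1: "c \<le> M (Suc i) x" and 2: "\<forall>s<Suc j. M s x < c" unfolding C_def by auto
  have "Suc i < Suc j" using assms by simp
  with 2 have "M (Suc i) x < c" by blast
  with 1 show False by simp
qed

lemma lower:
  assumes c: "1 < c" and eps: "0 \<le> \<epsilon>"
    and H1: "measure Q {x\<in>space Q. (\<Sum>t. ennreal ((ratio M (Suc t) x - 1)\<^sup>2)) = \<infinity>} = 1"
    and H2: "\<forall>t::nat. t \<ge> 1 \<longrightarrow> (\<forall>\<beta>::'a \<Rightarrow> real.
              \<beta> \<in> borel_measurable (F (t - 1)) \<and> (\<forall>\<omega>\<in>space Q. \<beta> \<omega> > 1) \<longrightarrow>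
              (AE \<omega> in Q.
                 nn_cond_exp Q (F (t - 1))
                   (\<lambda>x. ennreal (ratio M t x * indicator {y. ratio M t y \<ge> \<beta> y} x)) \<omega>
                 \<le> ennreal (\<beta> \<omega> * (1 + \<epsilon>)) *
                   nn_cond_exp Q (F (t - 1))
                   (\<lambda>x. indicator {y. ratio M t y \<ge> \<beta> y} x) \<omega>))"
  shows "1 \<le> ennreal (c * (1 + \<epsilon>)) * emeasure Q {x\<in>space Q. \<exists>t. c \<le> M t x}"
proof (rule ennreal_le_epsilon)
  fix e :: real assume e: "0 < e"
  define K where "K = 144 * sqrt c / e"
  have sc: "0 < sqrt c" using c by simp
  have K0: "0 < K" using sc e by (simp add: K_def)
  have kb: "sqrt c / (1 + K/72) \<le> e/2"
  proof -
    have "sqrt c / (1 + K/72) \<le> sqrt c / (K/72)"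
      using K0 sc by (intro divide_left_mono) auto
    also have "\<dots> = e/2" using sc e by (simp add: K_def field_simps)
    finally show ?thesis .
  qed
  have "(INF n. emeasure Q {x\<in>space Q. Qs n x < K}) < ennreal (e/(2*c))"
    using Qs_limit[OF H1] e c by simp
  then obtain n where n: "emeasure Q {x\<in>space Q. Qs n x < K} < ennreal (e/(2*c))"
    by (auto simp: INF_less_iff)
  have a1: "ennreal c * emeasure Q {x\<in>space Q. Qs n x < K} \<le> ennreal (e/2)"
  proof -
    have "ennreal c * emeasure Q {x\<in>space Q. Qs n x < K} \<le> ennreal c * ennreal (e/(2*c))"
      using n by (intro mult_left_mono) auto
    also have "\<dots> = ennreal (c * (e/(2*c)))" using c e by (subst ennreal_mult) auto
    also have "\<dots> = ennreal (e/2)" using c by simp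
    finally show ?thesis .
  qed
  have tb: "(\<integral>\<^sup>+x. indicator (B c n) x * ennreal (M n x) \<partial>Q) \<le> ennreal e"
  proof -
    have "(\<integral>\<^sup>+x. indicator (B c n) x * ennreal (M n x) \<partial>Q)
       \<le> ennreal c * emeasure Q {x\<in>space Q. Qs n x < K} + ennreal (sqrt c / (1 + K/72))"
      using tail_bound[of K c n] K0 c by simp
    also have "\<dots> \<le> ennreal (e/2) + ennreal (e/2)"
      using a1 kb by (intro add_mono ennreal_leI) auto
    also have "\<dots> = ennreal e" using e by (simp add: ennreal_plus[symmetric] del: ennreal_plus)
    finally show ?thesis .
  qed
  define T' where "T' = {x\<in>space Q. \<exists>t. c \<le> M t x}"
  have T's: "T' \<in> sets Q" unfolding T'_def by measurable
  have Cs: "\<And>t. C c (Suc t) \<in> sets Q" using C_sets setsQ by blast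
  have disj: "disjoint_family_on (\<lambda>t. C c (Suc t)) {..<n}"
    unfolding disjoint_family_on_def
  proof (intro ballI impI)
    fix i j :: nat assume ij: "i \<noteq> j"
    show "C c (Suc i) \<inter> C c (Suc j) = {}"
    proof (cases "i < j")
      case True then show ?thesis by (rule C_disj)
    next
      case False then have "j < i" using ij by simp
      then show ?thesis using C_disj[of j i c] by blast
    qed
  qed
  have Hp: "\<forall>\<beta>::'a \<Rightarrow> real.
              \<beta> \<in> borel_measurable (F (Suc p - 1)) \<and> (\<forall>\<omega>\<in>space Q. \<beta> \<omega> > 1) \<longrightarrow>
              (AE \<omega> in Q.
                 nn_cond_exp Q (F (Suc p - 1))
                   (\<lambda>x. ennreal (ratio M (Suc p) x * indicator {y. ratio M (Suc p) y \<ge> \<beta> y} x)) \<omega>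
                 \<le> ennreal (\<beta> \<omega> * (1 + \<epsilon>)) *
                   nn_cond_exp Q (F (Suc p - 1))
                   (\<lambda>x. indicator {y. ratio M (Suc p) y \<ge> \<beta> y} x) \<omega>)" for p
  proof -
    have o: "(1::nat) \<le> Suc p" by simp
    show ?thesis by (rule mp[OF spec[OF H2, of "Suc p"] o])
  qed
  have "1 = (\<integral>\<^sup>+x. indicator (B c n) x * ennreal (M n x) \<partial>Q)
    + (\<Sum>t<n. \<integral>\<^sup>+x. indicator (C c (Suc t)) x * ennreal (M (Suc t) x) \<partial>Q)"
    by (rule stop_id[OF c, symmetric])
  also have "\<dots> \<le> ennreal e + (\<Sum>t<n. ennreal (c * (1 + \<epsilon>)) * emeasure Q (C c (Suc t)))"
    apply (rule add_mono[OF tb])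
    apply (rule sum_mono)
    apply (rule overshoot[OF c eps Hp])
    done
  also have "(\<Sum>t<n. ennreal (c * (1 + \<epsilon>)) * emeasure Q (C c (Suc t)))
      = ennreal (c * (1 + \<epsilon>)) * emeasure Q (\<Union>t\<in>{..<n}. C c (Suc t))"
    using Cs disj by (simp add: sum_distrib_left[symmetric] sum_emeasure image_subset_iff)
  also have "\<dots> \<le> ennreal (c * (1 + \<epsilon>)) * emeasure Q T'"
    using T's by (intro mult_left_mono emeasure_mono) (auto simp: T'_def C_def)
  finally show "1 \<le> ennreal (c * (1 + \<epsilon>)) * emeasure Q {x\<in>space Q. \<exists>t. c \<le> M t x} + ennreal e"
    by (simp add: T'_def add.commute)
qed

end

lemma eps_lemma:
  fixes S :: ennreal
  assumes a: "0 < \<alpha>" and H: "\<And>\<epsilon>. \<epsilon> > 0 \<Longrightarrow> ennreal (\<alpha>/(1+\<epsilon>)) \<le> S"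
  shows "ennreal \<alpha> \<le> S"
proof (cases S rule: ennreal_cases)
  case (real r)
  have "\<alpha> \<le> r"
  proof (rule field_le_epsilon)
    fix d :: real assume d: "0 < d"
    define \<epsilon> where "\<epsilon> = d / (r + 1)"
    have e: "0 < \<epsilon>" using d real by (simp add: \<epsilon>_def)
    have "ennreal (\<alpha>/(1+\<epsilon>)) \<le> ennreal r" using H[OF e] real by simp
    then have "\<alpha>/(1+\<epsilon>) \<le> r" using real by (simp add: ennreal_le_iff)
    then have 1: "\<alpha> \<le> r * (1 + \<epsilon>)" using e by (simp add: pos_divide_le_eq)
    have "r * \<epsilon> = d * (r / (r + 1))" using real by (simp add: \<epsilon>_def)
    also have "\<dots> \<le> d * 1" using d real by (intro mult_left_mono) auto
    finally have "r * \<epsilon> \<le> d" by simp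
    then show "\<alpha> \<le> r + d" using 1 by (simp add: algebra_simps)
  qed
  then show ?thesis using real by (simp add: ennreal_leI)
next
  case top then show ?thesis by simp
qed


theorem corollary5:
  fixes \<Omega> :: "'a measure" and \<Q> :: "'a measure set" and U :: "'a \<Rightarrow> real"
    and S :: "'b measure" and X :: "nat \<Rightarrow> 'a \<Rightarrow> 'b" and M :: "nat \<Rightarrow> 'a \<Rightarrow> real"
  assumes "setting \<Omega> \<Q> U S X"
    and "is_QNM \<Omega> \<Q> U S X M"
    and "\<forall>\<omega>\<in>space \<Omega>. M 0 \<omega> = 1"
    and "\<forall>\<epsilon>::real. \<epsilon> > 0 \<longrightarrow> (\<exists>Q\<in>\<Q>.
           measure Q {\<omega>\<in>space Q. (\<Sum>t. ennreal ((ratio M (Suc t) \<omega> - 1)\<^sup>2)) = \<infinity>} = 1 \<and>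
           (\<forall>t::nat. t \<ge> 1 \<longrightarrow> (\<forall>\<beta>::'a \<Rightarrow> real.
              \<beta> \<in> borel_measurable (filt \<Omega> U S X (t - 1)) \<and> (\<forall>\<omega>\<in>space \<Omega>. \<beta> \<omega> > 1) \<longrightarrow>
              (AE \<omega> in Q.
                 nn_cond_exp Q (filt \<Omega> U S X (t - 1))
                   (\<lambda>x. ennreal (ratio M t x * indicator {y. ratio M t y \<ge> \<beta> y} x)) \<omega>
                 \<le> ennreal (\<beta> \<omega> * (1 + \<epsilon>)) *
                   nn_cond_exp Q (filt \<Omega> U S X (t - 1))
                   (\<lambda>x. indicator {y. ratio M t y \<ge> \<beta> y} x) \<omega>))))"
  shows "\<forall>\<alpha>::real. 0 < \<alpha> \<and> \<alpha> \<le> 1 \<longrightarrow>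
           (SUP Q\<in>\<Q>. emeasure Q {\<omega>\<in>space Q. (SUP t. ennreal (M t \<omega>)) \<ge> ennreal (1 / \<alpha>)})
             = ennreal \<alpha>"
proof -
  let ?F = "filt \<Omega> U S X"
  define Gen where "Gen t = {U -` B \<inter> space \<Omega> | B. B \<in> sets borel} \<union>
      (\<Union>i\<in>{1..t}. {X i -` A \<inter> space \<Omega> | A. A \<in> sets S})" for t
  have Um: "U \<in> borel_measurable \<Omega>" and Xm: "\<And>t. X t \<in> measurable \<Omega> S"
    using assms(1) unfolding setting_def by auto
  have Qp: "\<And>Q. Q \<in> \<Q> \<Longrightarrow> prob_space Q \<and> sets Q = sets \<Omega> \<and> space Q = space \<Omega>"
    using assms(1) unfolding setting_def by auto
  have qnm: "(\<forall>t. M t \<in> borel_measurable (?F t)) \<and>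
     (\<forall>t. \<forall>\<omega>\<in>space \<Omega>. M t \<omega> \<ge> 0) \<and>
     (\<forall>Q\<in>\<Q>. \<forall>t. integrable Q (M t)) \<and>
     (\<forall>Q\<in>\<Q>. \<forall>s t. s \<le> t \<longrightarrow>
        (AE \<omega> in Q. real_cond_exp Q (?F s) (M t) \<omega> = M s \<omega>))"
    using assms(2) unfolding is_QNM_def by simp
  have gsub: "Gen t \<subseteq> sets \<Omega>" for t
    unfolding Gen_def using Um Xm by (auto intro: measurable_sets)
  have gpow: "Gen t \<subseteq> Pow (space \<Omega>)" for t using gsub[of t] sets.sets_into_space by blast
  have Feq: "?F t = sigma (space \<Omega>) (Gen t)" for t unfolding filt_def Gen_def by simp
  have Fspace: "space (?F t) = space \<Omega>" for t unfolding Feq by (simp add: space_measure_of_conv)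
  have Fsets: "sets (?F t) = sigma_sets (space \<Omega>) (Gen t)" for t
    unfolding Feq using gpow by (simp add: sets_measure_of)
  have FsubO: "sets (?F t) \<subseteq> sets \<Omega>" for t
    unfolding Fsets by (rule sets.sigma_sets_subset[OF gsub])
  have Fmono: "s \<le> t \<Longrightarrow> sets (?F s) \<subseteq> sets (?F t)" for s t
  proof -
    assume st: "s \<le> t"
    have "Gen s \<subseteq> Gen t" unfolding Gen_def
      by (intro Un_mono UN_mono order_refl) (use st in auto)
    then show "sets (?F s) \<subseteq> sets (?F t)" unfolding Fsets by (rule sigma_sets_mono')
  qed
  have loc: "qnm Q ?F M" if Q: "Q \<in> \<Q>" for Q
  proof -
    have Q1: "prob_space Q" "sets Q = sets \<Omega>" "space Q = space \<Omega>" using Qp[OF Q] by auto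
    show ?thesis
    proof (rule qnm.intro)
      show "prob_space Q" by (rule Q1(1))
      show "subalgebra Q (?F t)" for t
        unfolding subalgebra_def using Q1 Fspace FsubO by auto
      show "subalgebra (?F t) (?F s)" if "s \<le> t" for s t
        unfolding subalgebra_def using Fspace Fmono[OF that] by auto
      show "M t \<in> borel_measurable (?F t)" for t using qnm by blast
      show "0 \<le> M t x" if "x \<in> space Q" for t x using qnm that Q1 by auto
      show "integrable Q (M t)" for t using qnm Q by blast
      show "AE x in Q. real_cond_exp Q (?F s) (M t) x = M s x" if "s \<le> t" for s t
        using qnm Q that by blast
      show "M 0 x = 1" if "x \<in> space Q" for x using assms(3) that Q1 by auto
    qed
  qed
  show ?thesis
  proof (intro allI impI)
    fix \<alpha> :: real assume a: "0 < \<alpha> \<and> \<alpha> \<le> 1"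
    let ?T = "\<lambda>Q. {\<omega>\<in>space Q. (SUP t. ennreal (M t \<omega>)) \<ge> ennreal (1 / \<alpha>)}"
    have up: "(SUP Q\<in>\<Q>. emeasure Q (?T Q)) \<le> ennreal \<alpha>"
    proof (rule SUP_least)
      fix Q assume "Q \<in> \<Q>"
      then show "emeasure Q (?T Q) \<le> ennreal \<alpha>" using qnm.upper[OF loc[OF \<open>Q \<in> \<Q>\<close>]] a by auto
    qed
    have low: "ennreal \<alpha> \<le> (SUP Q\<in>\<Q>. emeasure Q (?T Q))"
    proof (cases "\<alpha> = 1")
      case True
      obtain Q where Q: "Q \<in> \<Q>" using assms(4) by (metis zero_less_one)
      interpret prob_space Q using Qp[OF Q] by auto
      have "?T Q = space Q"
      proof (intro equalityI subsetI)
        fix x assume x: "x \<in> space Q"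
        have "ennreal (M 0 x) \<le> (SUP t. ennreal (M t x))" by (rule SUP_upper) simp
        then show "x \<in> ?T Q" using x assms(3) Qp[OF Q] True by auto
      qed auto
      then have "emeasure Q (?T Q) = 1" by (simp add: emeasure_space_1)
      then have "ennreal \<alpha> \<le> emeasure Q (?T Q)" using True by simp
      also have "\<dots> \<le> (SUP Q\<in>\<Q>. emeasure Q (?T Q))" by (rule SUP_upper[OF Q])
      finally show ?thesis .
    next
      case False
      then have a1: "\<alpha> < 1" using a by simp
      define c where "c = 1 / \<alpha>"
      have c1: "1 < c" using a a1 by (simp add: c_def)
      show ?thesis
      proof (rule eps_lemma)
        show "0 < \<alpha>" using a by simp
        fix \<epsilon> :: real assume e: "\<epsilon> > 0"
        obtain Q where Q: "Q \<in> \<Q>"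
          and H1: "measure Q {\<omega>\<in>space Q. (\<Sum>t. ennreal ((ratio M (Suc t) \<omega> - 1)\<^sup>2)) = \<infinity>} = 1"
          and H2: "\<forall>t::nat. t \<ge> 1 \<longrightarrow> (\<forall>\<beta>::'a \<Rightarrow> real.
              \<beta> \<in> borel_measurable (filt \<Omega> U S X (t - 1)) \<and> (\<forall>\<omega>\<in>space \<Omega>. \<beta> \<omega> > 1) \<longrightarrow>
              (AE \<omega> in Q.
                 nn_cond_exp Q (filt \<Omega> U S X (t - 1))
                   (\<lambda>x. ennreal (ratio M t x * indicator {y. ratio M t y \<ge> \<beta> y} x)) \<omega>
                 \<le> ennreal (\<beta> \<omega> * (1 + \<epsilon>)) *
                   nn_cond_exp Q (filt \<Omega> U S X (t - 1))
                   (\<lambda>x. indicator {y. ratio M t y \<ge> \<beta> y} x) \<omega>))"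
          using assms(4) e by blast
        have spQ: "space Q = space \<Omega>" using Qp[OF Q] by auto
        note H2' = H2[folded spQ]
        interpret prob_space Q using Qp[OF Q] by auto
        have L: "1 \<le> ennreal (c * (1 + \<epsilon>)) * emeasure Q {x\<in>space Q. \<exists>t. c \<le> M t x}"
          by (rule qnm.lower[OF loc[OF Q] c1 _ H1 H2']) (use e in simp)
        have sub: "{x\<in>space Q. \<exists>t. c \<le> M t x} \<subseteq> ?T Q"
        proof
          fix x assume "x \<in> {x\<in>space Q. \<exists>t. c \<le> M t x}"
          then obtain t where x: "x \<in> space Q" and t: "c \<le> M t x" by auto
          have "ennreal (1/\<alpha>) \<le> ennreal (M t x)" using t by (simp add: c_def ennreal_leI)
          also have "\<dots> \<le> (SUP t. ennreal (M t x))" by (rule SUP_upper) simp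
          finally show "x \<in> ?T Q" using x by simp
        qed
        have Ts: "?T Q \<in> sets Q"
        proof -
          have [measurable]: "M t \<in> borel_measurable Q" for t
            using qnm.MmeasQ[OF loc[OF Q]] .
          show ?thesis by measurable
        qed
        have "1 \<le> ennreal (c * (1 + \<epsilon>)) * emeasure Q (?T Q)"
          using L by (rule order_trans) (intro mult_left_mono emeasure_mono[OF sub Ts], auto)
        then have "ennreal (\<alpha>/(1+\<epsilon>)) * 1 \<le> ennreal (\<alpha>/(1+\<epsilon>)) * (ennreal (c * (1 + \<epsilon>)) * emeasure Q (?T Q))"
          by (rule mult_left_mono) simp
        also have "ennreal (\<alpha>/(1+\<epsilon>)) * (ennreal (c * (1 + \<epsilon>)) * emeasure Q (?T Q))
            = ennreal (\<alpha>/(1+\<epsilon>) * (c * (1 + \<epsilon>))) * emeasure Q (?T Q)"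
          using a e c1 by (subst ennreal_mult) (auto simp: mult.assoc)
        also have "\<alpha>/(1+\<epsilon>) * (c * (1 + \<epsilon>)) = 1"
        proof -
          have "1 + \<epsilon> \<noteq> 0" "\<alpha> \<noteq> 0" using a e by auto
          then show ?thesis by (simp add: c_def)
        qed
        finally have "ennreal (\<alpha>/(1+\<epsilon>)) \<le> emeasure Q (?T Q)" by simp
        also have "\<dots> \<le> (SUP Q\<in>\<Q>. emeasure Q (?T Q))" by (rule SUP_upper[OF Q])
        finally show "ennreal (\<alpha>/(1+\<epsilon>)) \<le> (SUP Q\<in>\<Q>. emeasure Q (?T Q))" .
      qed
    qed
    show "(SUP Q\<in>\<Q>. emeasure Q (?T Q)) = ennreal \<alpha>" using up low by (rule order_antisym)
  qed
qed

end
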